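(* Let $\varphi_n(x)=\sqrt{n\pi}\cos^{2n}(\pi x)$ for $n\in\mathbb N$, and let $\eta\in(0,1)$. If $f\in L^1(-\eta,1-\eta)$ is continuous at $x=0$, then $$\lim_{n\to\infty}\int_{-\eta}^{1-\eta}f(x)\varphi_n(x)\,dx=f(0).$$ If $f\in L^1[0,1]$ is continuous at $x=0$ and at $x=1$, then $$\lim_{n\to\infty}\int_0^1 f(x)\varphi_n(x)\,dx=\frac{f(0)+f(1)}{2}.$$
   Context: $\cos^{2n}(y)$ denotes $(\cos y)^{2n}$. *)

theory Defs
  imports "HOL-Analysis.Analysis"
begin

definition phi :: "nat \<Rightarrow> real \<Rightarrow> real" where
  "phi n x = sqrt (real n * pi) * (cos (pi * x)) ^ (2 * n)"

end

theory Submission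
  imports Defs
begin

definition cw :: "nat \<Rightarrow> real" where
  "cw n = (\<Prod>k=1..n. (2*real k - 1) / (2*real k))"

lemma cw_Suc: "cw (Suc n) = cw n * ((2*real n + 1) / (2*real n + 2))"
  unfolding cw_def by (simp add: prod.nat_ivl_Suc' algebra_simps)

lemma cw_0: "cw 0 = 1" by (simp add: cw_def)

lemma cw_nonneg: "0 \<le> cw n"
  unfolding cw_def by (intro prod_nonneg) auto

lemma wallis_cw: "(\<Prod>k=1..n. (4*real k^2) / (4*real k^2 - 1)) * ((2*real n + 1) * cw n ^ 2) = 1"
proof (induction n)
  case 0 then show ?case by (simp add: cw_0)
next
  case (Suc n)
  define P where "P = (\<Prod>k=1..n. (4*real k^2) / (4*real k^2 - 1))"
  define C where "C = cw n"
  define x where "x = real n"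
  have x0: "0 \<le> x" by (simp add: x_def)
  have e: "(\<Prod>k=1..Suc n. (4*real k^2) / (4*real k^2 - 1)) = P * ((4*(x+1)^2) / (4*(x + 1)^2 - 1))"
    unfolding P_def x_def by (simp add: prod.nat_ivl_Suc' add.commute)
  have c: "cw (Suc n) = C * ((2*x + 1) / (2*x + 2))" unfolding C_def x_def by (rule cw_Suc)
  have IH: "P * ((2*x + 1) * C^2) = 1" using Suc unfolding P_def C_def x_def .
  have key: "((4*(x+1)^2) / (4*(x + 1)^2 - 1)) * ((2*(x+1) + 1) * ((2*x + 1) / (2*x + 2))^2) = 2*x+1"
  proof -
    have d: "4*(x + 1)^2 - 1 = (2*x+1)*(2*x+3)" by (simp add: power2_eq_square algebra_simps)
    have p: "0 < 2*x+1" "0 < 2*x+3" "0 < 2*x+2" "0 < x + 1" using x0 by auto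
    have q: "2*(x+1) + 1 = 2*x+3" "(2*x+2)^2 = 4*(x+1)^2" by (simp_all add: power2_eq_square algebra_simps)
    show ?thesis unfolding d q power_divide using p by (simp add: divide_simps power2_eq_square)
  qed
  have "(\<Prod>k=1..Suc n. (4*real k^2) / (4*real k^2 - 1)) * ((2*real (Suc n) + 1) * cw (Suc n) ^ 2)
      = P * (((4*(x+1)^2) / (4*(x + 1)^2 - 1)) * ((2*(x+1) + 1) * ((2*x + 1) / (2*x + 2))^2)) * C^2"
  proof -
    have s: "2*real (Suc n) + 1 = 2*(x+1)+1" by (simp add: x_def)
    have g: "P*A * (D * (C*B)^2) = P*(A*(D*B^2))*C^2" for A B D by (simp add: power_mult_distrib mult_ac)
    show ?thesis unfolding e c s g ..
  qed
  also have "\<dots> = 1" unfolding key using IH by (simp add: algebra_simps)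
  finally show ?case .
qed

lemma cw_limit: "(\<lambda>n. sqrt (real n * pi) * cw n) \<longlonglongrightarrow> 1"
proof -
  let ?W = "\<lambda>n. (\<Prod>k=1..n. (4*real k^2) / (4*real k^2 - 1))"
  have W0: "?W n \<noteq> 0" for n using wallis_cw[of n] by (metis mult_zero_left zero_neq_one)
  have "(\<lambda>n. inverse (?W n)) \<longlonglongrightarrow> inverse (pi/2)"
    by (rule tendsto_inverse[OF wallis]) simp
  moreover have "inverse (?W n) = (2*real n + 1) * cw n ^ 2" for n
    using wallis_cw[of n] by (rule inverse_unique)
  ultimately have L1: "(\<lambda>n. (2*real n + 1) * cw n ^ 2) \<longlonglongrightarrow> 2/pi" by simp
  have L2: "(\<lambda>n. pi * (real n / (2*real n + 1))) \<longlonglongrightarrow> pi * (1/2)"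
  proof -
    have "filterlim (\<lambda>n. 1/2 + real n) at_top sequentially"
      by (rule filterlim_tendsto_add_at_top[OF tendsto_const filterlim_real_sequentially])
    then have "(\<lambda>n. inverse (1/2 + real n)) \<longlonglongrightarrow> 0"
      by (rule tendsto_inverse_0_at_top)
    then have "(\<lambda>n. pi * (1/2 - inverse (1/2 + real n) / 4)) \<longlonglongrightarrow> pi * (1/2 - 0/4)"
      by (intro tendsto_intros) auto
    moreover have "1/2 - inverse (1/2 + real n) / 4 = real n / (2*real n + 1)" for n
      by (simp add: field_simps)
    ultimately show ?thesis by simp
  qed
  have "(\<lambda>n. pi * (real n / (2*real n + 1)) * ((2*real n + 1) * cw n ^ 2)) \<longlonglongrightarrow> pi * (1/2) * (2/pi)"
    by (rule tendsto_mult[OF L2 L1])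
  moreover have "pi * (real n / (2*real n + 1)) * ((2*real n + 1) * cw n ^ 2) = (sqrt (real n * pi) * cw n)^2" for n
    by (simp add: power_mult_distrib field_simps)
  ultimately have "(\<lambda>n. (sqrt (real n * pi) * cw n)^2) \<longlonglongrightarrow> 1" by simp
  then have "(\<lambda>n. sqrt ((sqrt (real n * pi) * cw n)^2)) \<longlonglongrightarrow> sqrt 1" by (rule tendsto_real_sqrt)
  then show ?thesis using cw_nonneg by simp
qed

lemma cos_pow_deriv:
  "((\<lambda>x. sin (pi*x) * cos (pi*x)^(2*n+1)) has_real_derivative
     (pi * ((2*real n+2) * cos (pi*x)^(2*n+2) - (2*real n+1) * cos (pi*x)^(2*n)))) (at x)"
proof -
  have c: "((\<lambda>x. cos (pi*x)) has_real_derivative (-sin(pi*x)*pi)) (at x)"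
    by (auto intro!: derivative_eq_intros)
  have s: "((\<lambda>x. sin (pi*x)) has_real_derivative (cos(pi*x)*pi)) (at x)"
    by (auto intro!: derivative_eq_intros)
  have d: "((\<lambda>x. sin (pi*x) * cos (pi*x)^(2*n+1)) has_real_derivative
      (cos(pi*x)*pi * cos (pi*x)^(2*n+1) + of_nat (2*n+1) * (-sin(pi*x)*pi * cos (pi*x)^(2*n+1 - Suc 0)) * sin (pi*x))) (at x)"
    by (rule DERIV_mult[OF s DERIV_power[OF c]])
  have alg: "u*pi*u^(2*n+1) + of_nat (2*n+1) * (-v * pi * u^(2*n+1 - Suc 0)) * v
     = pi * ((2*real n+2) * u^(2*n+2) - (2*real n+1) * u^(2*n))" if ss: "v * v = 1 - u^2" for u v :: real
  proof -
    have e1: "u*pi*u^(2*n+1) = pi * u^(2*n+2)" by (simp add: power_Suc)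
    have e2: "of_nat (2*n+1) * (-v * pi * u^(2*n+1 - Suc 0)) * v = - (2*real n+1) * pi * (v * v) * u^(2*n)"
      by (simp add: algebra_simps)
    have e3: "u^(2*n+2) = u^2 * u^(2*n)" by (simp add: power_add mult.commute power2_eq_square)
    show ?thesis unfolding e1 e2 ss e3 by (simp add: algebra_simps)
  qed
  have "cos(pi*x)*pi * cos (pi*x)^(2*n+1) + of_nat (2*n+1) * (-sin(pi*x)*pi * cos (pi*x)^(2*n+1 - Suc 0)) * sin (pi*x)
     = pi * ((2*real n+2) * cos (pi*x)^(2*n+2) - (2*real n+1) * cos (pi*x)^(2*n))"
    by (rule alg) (metis sin_squared_eq power2_eq_square)
  then show ?thesis using d by simp
qed

lemma cos_pow_integral:
  assumes ab: "a \<le> b"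
    and per: "\<And>n. sin (pi*a) * cos (pi*a)^(2*n+1) = sin (pi*b) * cos (pi*b)^(2*n+1)"
  shows "integral {a..b} (\<lambda>x. cos (pi*x)^(2*n)) = (b - a) * cw n"
proof (induction n)
  case 0 then show ?case using ab by (simp add: cw_0)
next
  case (Suc n)
  let ?J = "\<lambda>n. integral {a..b} (\<lambda>x. cos (pi*x)^(2*n))"
  have int: "(\<lambda>x. cos (pi*x)^(2*m)) integrable_on {a..b}" for m
    by (intro integrable_continuous_interval continuous_intros)
  have der: "((\<lambda>x. sin (pi*x) * cos (pi*x)^(2*n+1)) has_vector_derivative
     (pi * ((2*real n+2) * cos (pi*x)^(2*n+2) - (2*real n+1) * cos (pi*x)^(2*n)))) (at x within {a..b})" for x
    using cos_pow_deriv[of n x] unfolding has_real_derivative_iff_has_vector_derivative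
    by (rule has_vector_derivative_at_within)
  have F: "((\<lambda>x. pi * ((2*real n+2) * cos (pi*x)^(2*n+2) - (2*real n+1) * cos (pi*x)^(2*n)))
      has_integral (sin (pi*b) * cos (pi*b)^(2*n+1) - sin (pi*a) * cos (pi*a)^(2*n+1))) {a..b}"
    using ab der by (intro fundamental_theorem_of_calculus) auto
  have F0: "(sin (pi*b) * cos (pi*b)^(2*n+1) - sin (pi*a) * cos (pi*a)^(2*n+1)) = 0"
    using per[of n] by simp
  have e2: "2 * Suc n = 2*n+2" by simp
  have i1: "((\<lambda>x. cos (pi*x)^(2*n+2)) has_integral ?J (Suc n)) {a..b}"
    using integrable_integral[OF int[of "Suc n"]] unfolding e2 .
  have i0: "((\<lambda>x. cos (pi*x)^(2*n)) has_integral ?J n) {a..b}"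
    using integrable_integral[OF int[of n]] .
  have G: "((\<lambda>x. pi * ((2*real n+2) * cos (pi*x)^(2*n+2) - (2*real n+1) * cos (pi*x)^(2*n)))
      has_integral (pi * ((2*real n+2) * ?J (Suc n) - (2*real n+1) * ?J n))) {a..b}"
    by (intro has_integral_mult_right has_integral_diff i1 i0)
  have "pi * ((2*real n+2) * ?J (Suc n) - (2*real n+1) * ?J n) = 0"
    using has_integral_unique[OF G F] F0 by simp
  then have "(2*real n+2) * ?J (Suc n) = (2*real n+1) * ?J n" by simp
  then have "?J (Suc n) = ?J n * ((2*real n + 1) / (2*real n + 2))"
    by (simp add: divide_simps mult.commute)
  then show ?case using Suc by (simp add: cw_Suc)
qed

lemma phi_nonneg: "0 \<le> phi n x"
  unfolding phi_def by (simp add: power_mult)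

lemma phi_le: "phi n x \<le> sqrt (real n * pi)"
proof -
  have "cos (pi*x)^(2*n) \<le> 1"
    by (simp add: power_mult power_le_one abs_square_le_1)
  then show ?thesis unfolding phi_def
    by (simp add: mult_left_le)
qed

lemma phi_cont: "continuous_on A (phi n)"
  unfolding phi_def by (intro continuous_intros)

lemma phi_meas [measurable]: "phi n \<in> borel_measurable lborel"
  unfolding phi_def by measurable

lemma phi_set_integrable: "set_integrable lborel {a..b} (phi n)"
  unfolding set_integrable_def by (rule borel_integrable_compact) (auto intro: phi_cont)

lemma phi_mass:
  assumes ab: "a \<le> b"
    and per: "\<And>n. sin (pi*a) * cos (pi*a)^(2*n+1) = sin (pi*b) * cos (pi*b)^(2*n+1)"
  shows "(\<lambda>n. LINT x:{a..b}|lborel. phi n x) \<longlonglongrightarrow> b - a"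
proof -
  have "(LINT x:{a..b}|lborel. phi n x) = (b - a) * (sqrt (real n * pi) * cw n)" for n
  proof -
    have "(LINT x:{a..b}|lborel. phi n x) = integral {a..b} (phi n)"
      by (rule set_borel_integral_eq_integral(2)[OF phi_set_integrable])
    also have "\<dots> = integral {a..b} (\<lambda>x. sqrt (real n * pi) * cos (pi*x)^(2*n))"
      unfolding phi_def ..
    also have "\<dots> = sqrt (real n * pi) * ((b - a) * cw n)"
      using cos_pow_integral[OF ab per] by simp
    finally show ?thesis by simp
  qed
  moreover have "(\<lambda>n. (b - a) * (sqrt (real n * pi) * cw n)) \<longlonglongrightarrow> (b - a) * 1"
    by (intro tendsto_intros cw_limit)
  ultimately show ?thesis by simp
qed

lemma phi_far:
  assumes S: "compact S" and nz: "\<And>x. x \<in> S \<Longrightarrow> sin (pi*x) \<noteq> 0" and e: "0 < e"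
  shows "eventually (\<lambda>n. \<forall>x\<in>S. phi n x \<le> e) sequentially"
proof (cases "S = {}")
  case True then show ?thesis by simp
next
  case False
  have "continuous_on S (\<lambda>x. cos (pi*x)^2)" by (intro continuous_intros)
  from continuous_attains_sup[OF S False this]
  obtain x0 where x0: "x0 \<in> S" and mx: "\<And>y. y \<in> S \<Longrightarrow> cos (pi*y)^2 \<le> cos (pi*x0)^2" by blast
  define q where "q = cos (pi*x0)^2"
  have q0: "0 \<le> q" by (simp add: q_def)
  have q1: "q < 1"
  proof -
    have "sin (pi*x0)^2 > 0" using nz[OF x0] by simp
    then show ?thesis unfolding q_def using sin_cos_squared_add[of "pi*x0"] by linarith
  qed
  have "(\<lambda>n. sqrt pi * (real n * q ^ n)) \<longlonglongrightarrow> sqrt pi * 0"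
    by (intro tendsto_intros powser_times_n_limit_0) (use q0 q1 in simp)
  then have "eventually (\<lambda>n. sqrt pi * (real n * q ^ n) < e) sequentially"
    using e by (simp add: order_tendsto_iff)
  then show ?thesis
  proof eventually_elim
    case (elim n)
    show ?case
    proof
      fix x assume x: "x \<in> S"
      have "phi n x = sqrt (real n * pi) * (cos (pi*x)^2)^n"
        unfolding phi_def by (simp add: power_mult)
      also have "\<dots> \<le> sqrt (real n * pi) * q^n"
        by (intro mult_left_mono power_mono) (use mx[OF x] in \<open>auto simp: q_def\<close>)
      also have "\<dots> \<le> sqrt pi * (real n * q ^ n)"
      proof -
        have "sqrt (real n) \<le> real n"
        proof (cases "n = 0")
          case False
          then have "1 \<le> real n" by simp
          then show ?thesis by (metis less_eq_real_def linorder_not_less not_one_less_zero order.strict_trans1 pos2 real_sqrt_pow2_iff self_le_power)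
        qed simp
        then have "sqrt (real n * pi) \<le> sqrt pi * real n" by (simp add: real_sqrt_mult mult.commute)
        then have "sqrt (real n * pi) * q^n \<le> sqrt pi * real n * q^n"
          by (intro mult_right_mono) (use q0 in auto)
        then show ?thesis by (simp add: mult.assoc)
      qed
      also have "\<dots> \<le> e" using elim by simp
      finally show "phi n x \<le> e" .
    qed
  qed
qed

lemma concentrate:
  fixes f :: "real \<Rightarrow> real"
  assumes p: "p \<in> {a..b}" and fi: "set_integrable lborel {a..b} f"
    and fc: "continuous (at p within {a..b}) f"
    and mass: "(\<lambda>n. LINT x:{a..b}|lborel. phi n x) \<longlonglongrightarrow> m"
    and far: "\<And>\<delta> \<epsilon>. \<delta> > 0 \<Longrightarrow> \<epsilon> > 0 \<Longrightarrow>
       eventually (\<lambda>n. \<forall>x\<in>{a..b}. \<delta> \<le> \<bar>x - p\<bar> \<longrightarrow> phi n x \<le> \<epsilon>) sequentially"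
  shows "(\<lambda>n. LINT x:{a..b}|lborel. f x * phi n x) \<longlonglongrightarrow> m * f p"
proof -
  have fm: "set_borel_measurable lborel {a..b} f"
    using fi unfolding set_integrable_def set_borel_measurable_def by (rule borel_measurable_integrable)
  have fphi_int: "set_integrable lborel {a..b} (\<lambda>x. f x * phi n x)" for n
  proof (rule set_integrable_bound[where f = "\<lambda>x. sqrt (real n * pi) * f x"])
    show "set_integrable lborel {a..b} (\<lambda>x. sqrt (real n * pi) * f x)" using fi by simp
    have "(\<lambda>x. indicator {a..b} x *\<^sub>R (f x * phi n x)) = (\<lambda>x. (indicator {a..b} x *\<^sub>R f x) * phi n x)"
      by (simp add: fun_eq_iff)
    then show "set_borel_measurable lborel {a..b} (\<lambda>x. f x * phi n x)"
      using fm unfolding set_borel_measurable_def by simp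
    show "AE x in lborel. x \<in> {a..b} \<longrightarrow> norm (f x * phi n x) \<le> norm (sqrt (real n * pi) * f x)"
    proof (intro AE_I2 impI)
      fix x
      have "\<bar>f x\<bar> * phi n x \<le> \<bar>f x\<bar> * sqrt (real n * pi)"
        by (intro mult_left_mono phi_le) simp
      then show "norm (f x * phi n x) \<le> norm (sqrt (real n * pi) * f x)"
        using phi_nonneg[of n x] by (simp add: abs_mult mult.commute)
    qed
  qed
  have cint: "set_integrable lborel {a..b} (\<lambda>x. c)" for c :: real
    unfolding set_integrable_def by (rule borel_integrable_compact) (auto intro: continuous_on_const)
  have dint: "set_integrable lborel {a..b} (\<lambda>x. f x - f p)"
    using fi cint by (rule set_integral_diff(1))
  have pint: "set_integrable lborel {a..b} (\<lambda>x. f p * phi n x)" for n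
    using phi_set_integrable by simp
  have hint: "set_integrable lborel {a..b} (\<lambda>x. (f x - f p) * phi n x)" for n
    using set_integral_diff(1)[OF fphi_int pint] by (simp add: left_diff_distrib)
  define h where "h n = (LINT x:{a..b}|lborel. (f x - f p) * phi n x)" for n
  have heq: "(LINT x:{a..b}|lborel. f x * phi n x) = h n + f p * (LINT x:{a..b}|lborel. phi n x)" for n
    unfolding h_def left_diff_distrib set_integral_diff(2)[OF fphi_int pint] by simp
  have "h \<longlonglongrightarrow> 0"
  proof (rule tendstoI)
    fix e :: real assume e: "0 < e"
    define M where "M = (LINT x:{a..b}|lborel. \<bar>f x - f p\<bar>)"
    define \<epsilon> where "\<epsilon> = e / (4 * (\<bar>m\<bar> + 1))"
    define \<eta> where "\<eta> = e / (4 * (\<bar>M\<bar> + 1))"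
    have \<epsilon>0: "0 < \<epsilon>" using e by (simp add: \<epsilon>_def)
    have \<eta>0: "0 < \<eta>" using e by (simp add: \<eta>_def)
    obtain \<delta> where \<delta>0: "0 < \<delta>" and \<delta>: "\<And>x. x \<in> {a..b} \<Longrightarrow> dist x p < \<delta> \<Longrightarrow> dist (f x) (f p) < \<epsilon>"
      using fc \<epsilon>0 unfolding continuous_within_eps_delta by metis
    have ev1: "eventually (\<lambda>n. dist (LINT x:{a..b}|lborel. phi n x) m < 1) sequentially"
      using mass by (rule tendstoD) simp
    show "eventually (\<lambda>n. dist (h n) 0 < e) sequentially"
      using ev1 far[OF \<delta>0 \<eta>0]
    proof eventually_elim
      case (elim n)
      let ?I = "LINT x:{a..b}|lborel. phi n x"
      have I: "?I \<le> \<bar>m\<bar> + 1" using elim(1) by (simp add: dist_real_def)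
      have pt: "\<bar>(f x - f p) * phi n x\<bar> \<le> \<epsilon> * phi n x + \<eta> * \<bar>f x - f p\<bar>" if x: "x \<in> {a..b}" for x
      proof (cases "dist x p < \<delta>")
        case True
        then have "\<bar>f x - f p\<bar> \<le> \<epsilon>" using \<delta>[OF x] by (simp add: dist_real_def)
        then have "\<bar>f x - f p\<bar> * phi n x \<le> \<epsilon> * phi n x"
          by (rule mult_right_mono[OF _ phi_nonneg])
        then have "\<bar>(f x - f p) * phi n x\<bar> \<le> \<epsilon> * phi n x"
          using phi_nonneg[of n x] by (simp add: abs_mult)
        then show ?thesis using \<eta>0 by (smt (verit) mult_nonneg_nonneg abs_ge_zero)
      next
        case False
        then have "phi n x \<le> \<eta>" using elim(2) x by (simp add: dist_real_def)
        then have "\<bar>f x - f p\<bar> * phi n x \<le> \<bar>f x - f p\<bar> * \<eta>"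
          by (rule mult_left_mono) simp
        then have "\<bar>(f x - f p) * phi n x\<bar> \<le> \<eta> * \<bar>f x - f p\<bar>"
          using phi_nonneg[of n x] by (simp add: abs_mult mult.commute)
        then show ?thesis using \<epsilon>0 phi_nonneg[of n x] by (smt (verit) mult_nonneg_nonneg)
      qed
      have "\<bar>h n\<bar> \<le> (LINT x:{a..b}|lborel. \<bar>(f x - f p) * phi n x\<bar>)"
        unfolding h_def using set_integral_norm_bound[OF hint[of n]] by simp
      also have "\<dots> \<le> (LINT x:{a..b}|lborel. \<epsilon> * phi n x + \<eta> * \<bar>f x - f p\<bar>)"
        by (rule set_integral_mono)
           (use pt set_integrable_abs[OF hint[of n]] phi_set_integrable[of a b n] set_integrable_abs[OF dint] in auto)
      also have "\<dots> = \<epsilon> * ?I + \<eta> * M"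
        unfolding M_def
        by (subst set_integral_add(2)) (use phi_set_integrable[of a b n] set_integrable_abs[OF dint] in auto)
      also have "\<dots> \<le> \<epsilon> * (\<bar>m\<bar> + 1) + \<eta> * (\<bar>M\<bar> + 1)"
        by (intro add_mono mult_left_mono) (use I \<epsilon>0 \<eta>0 in auto)
      also have "\<dots> = e/4 + e/4"
      proof -
        have "\<epsilon> * (\<bar>m\<bar> + 1) = e/4" unfolding \<epsilon>_def
          by (simp add: field_simps add_nonneg_eq_0_iff)
        moreover have "\<eta> * (\<bar>M\<bar> + 1) = e/4" unfolding \<eta>_def
          by (simp add: field_simps add_nonneg_eq_0_iff)
        ultimately show ?thesis by simp
      qed
      finally show ?case using e by (simp add: dist_real_def)
    qed
  qed
  then have "(\<lambda>n. h n + f p * (LINT x:{a..b}|lborel. phi n x)) \<longlonglongrightarrow> 0 + f p * m"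
    by (intro tendsto_intros mass)
  then show ?thesis unfolding heq by (simp add: mult.commute)
qed

lemma fphi_integrable:
  fixes f :: "real \<Rightarrow> real"
  assumes fi: "set_integrable lborel {a..b} f"
  shows "set_integrable lborel {a..b} (\<lambda>x. f x * phi n x)"
proof (rule set_integrable_bound[where f = "\<lambda>x. sqrt (real n * pi) * f x"])
  have fm: "set_borel_measurable lborel {a..b} f"
    using fi unfolding set_integrable_def set_borel_measurable_def by (rule borel_measurable_integrable)
  show "set_integrable lborel {a..b} (\<lambda>x. sqrt (real n * pi) * f x)" using fi by simp
  have "(\<lambda>x. indicator {a..b} x *\<^sub>R (f x * phi n x)) = (\<lambda>x. (indicator {a..b} x *\<^sub>R f x) * phi n x)"
    by (simp add: fun_eq_iff)
  then show "set_borel_measurable lborel {a..b} (\<lambda>x. f x * phi n x)"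
    using fm unfolding set_borel_measurable_def by simp
  show "AE x in lborel. x \<in> {a..b} \<longrightarrow> norm (f x * phi n x) \<le> norm (sqrt (real n * pi) * f x)"
  proof (intro AE_I2 impI)
    fix x
    have "\<bar>f x\<bar> * phi n x \<le> \<bar>f x\<bar> * sqrt (real n * pi)"
      by (intro mult_left_mono phi_le) simp
    then show "norm (f x * phi n x) \<le> norm (sqrt (real n * pi) * f x)"
      using phi_nonneg[of n x] by (simp add: abs_mult mult.commute)
  qed
qed

lemma far_lemma:
  assumes nz: "\<And>x. x \<in> {a..b} \<Longrightarrow> x \<noteq> p \<Longrightarrow> sin (pi*x) \<noteq> 0"
    and d: "\<delta> > 0" and e: "\<epsilon> > 0"
  shows "eventually (\<lambda>n. \<forall>x\<in>{a..b}. \<delta> \<le> \<bar>x - p\<bar> \<longrightarrow> phi n x \<le> \<epsilon>) sequentially"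
proof -
  let ?S = "{a..b} \<inter> {x. \<delta> \<le> \<bar>x - p\<bar>}"
  have "closed {x::real. \<delta> \<le> \<bar>x - p\<bar>}"
    by (intro closed_Collect_le continuous_intros)
  then have "compact ?S" by (intro compact_Int_closed compact_Icc)
  moreover have "sin (pi*x) \<noteq> 0" if "x \<in> ?S" for x
    using that d by (intro nz) auto
  ultimately have "eventually (\<lambda>n. \<forall>x\<in>?S. phi n x \<le> \<epsilon>) sequentially"
    using e by (intro phi_far) auto
  then show ?thesis by eventually_elim auto
qed

lemma sin_int_cases:
  assumes "sin (pi*x) = 0" obtains i :: int where "x = of_int i"
  using assms unfolding sin_zero_iff_int2 by (metis mult.commute mult_cancel_left pi_neq_zero)

lemma mass_half1: "(\<lambda>n. LINT x:{0..1/2}|lborel. phi n x) \<longlonglongrightarrow> 1/2"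
proof -
  have ph: "pi * (1/2) = pi/2" by simp
  have per: "sin (pi*0) * cos (pi*0)^(2*n+1) = sin (pi*(1/2)) * cos (pi*(1/2))^(2*n+1)" for n
    unfolding ph by simp
  show ?thesis using phi_mass[of 0 "1/2", OF _ per] by simp
qed
lemma mass_half2: "(\<lambda>n. LINT x:{1/2..1}|lborel. phi n x) \<longlonglongrightarrow> 1/2"
proof -
  have ph: "pi * (1/2) = pi/2" by simp
  have per: "sin (pi*(1/2)) * cos (pi*(1/2))^(2*n+1) = sin (pi*1) * cos (pi*1)^(2*n+1)" for n
    unfolding ph by simp
  have "(\<lambda>n. LINT x:{1/2..1}|lborel. phi n x) \<longlonglongrightarrow> 1 - 1/2" 
    by (rule phi_mass[OF _ per]) simp
  then show ?thesis by simp
qed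

theorem lemma3p2:
  fixes \<eta> :: real and f g :: "real \<Rightarrow> real"
  shows
  "(0 < \<eta> \<and> \<eta> < 1 \<and> set_integrable lborel {-\<eta>..1-\<eta>} f
      \<and> continuous (at 0 within {-\<eta>..1-\<eta>}) f
    \<longrightarrow> (\<lambda>n. LINT x:{-\<eta>..1-\<eta>}|lborel. f x * phi n x) \<longlonglongrightarrow> f 0)
   \<and> (set_integrable lborel {0..1} g
      \<and> continuous (at 0 within {0..1}) g \<and> continuous (at 1 within {0..1}) g
    \<longrightarrow> (\<lambda>n. LINT x:{0..1}|lborel. g x * phi n x) \<longlonglongrightarrow> (g 0 + g 1) / 2)"
proof (intro conjI impI)
  assume H: "0 < \<eta> \<and> \<eta> < 1 \<and> set_integrable lborel {-\<eta>..1-\<eta>} f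
      \<and> continuous (at 0 within {-\<eta>..1-\<eta>}) f"
  then have h0: "0 < \<eta>" and h1: "\<eta> < 1" and fi: "set_integrable lborel {-\<eta>..1-\<eta>} f"
    and fc: "continuous (at 0 within {-\<eta>..1-\<eta>}) f" by auto
  have per: "sin (pi*(-\<eta>)) * cos (pi*(-\<eta>))^(2*n+1) = sin (pi*(1-\<eta>)) * cos (pi*(1-\<eta>))^(2*n+1)" for n
  proof -
    have "pi*(1-\<eta>) = pi - pi*\<eta>" by (simp add: algebra_simps)
    then show ?thesis by (simp add: sin_pi_minus cos_pi_minus)
  qed
  have mass: "(\<lambda>n. LINT x:{-\<eta>..1-\<eta>}|lborel. phi n x) \<longlonglongrightarrow> 1"
    using phi_mass[of "-\<eta>" "1-\<eta>", OF _ per] h1 by simp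
  have far: "eventually (\<lambda>n. \<forall>x\<in>{-\<eta>..1-\<eta>}. \<delta> \<le> \<bar>x - 0\<bar> \<longrightarrow> phi n x \<le> \<epsilon>) sequentially"
    if "\<delta> > 0" "\<epsilon> > 0" for \<delta> \<epsilon>
  proof (rule far_lemma[OF _ that])
    fix x assume x: "x \<in> {-\<eta>..1-\<eta>}" "x \<noteq> 0"
    show "sin (pi*x) \<noteq> 0"
    proof
      assume "sin (pi*x) = 0"
      then obtain i :: int where i: "x = of_int i" by (rule sin_int_cases)
      then have "-1 < of_int i" "of_int i < (1::real)" using x h0 h1 by auto
      then have "-1 < i" "i < 1" by (metis of_int_less_iff of_int_minus of_int_1, simp)
      then have "i = 0" by linarith
      then show False using i x by simp
    qed
  qed
  have "(\<lambda>n. LINT x:{-\<eta>..1-\<eta>}|lborel. f x * phi n x) \<longlonglongrightarrow> 1 * f 0"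
    by (rule concentrate[OF _ fi fc mass far]) (use h0 h1 in auto)
  then show "(\<lambda>n. LINT x:{-\<eta>..1-\<eta>}|lborel. f x * phi n x) \<longlonglongrightarrow> f 0" by simp
next
  assume H: "set_integrable lborel {0..1} g
      \<and> continuous (at 0 within {0..1}) g \<and> continuous (at 1 within {0..1}) g"
  then have gi: "set_integrable lborel {0..1} g" and gc0: "continuous (at 0 within {0..1}) g"
    and gc1: "continuous (at 1 within {0..1}) g" by auto
  have gi1: "set_integrable lborel {0..1/2} g"
    by (rule set_integrable_subset[OF gi]) auto
  have gi2: "set_integrable lborel {1/2..1} g"
    by (rule set_integrable_subset[OF gi]) auto
  have gc0': "continuous (at 0 within {0..1/2}) g"
    by (rule continuous_within_subset[OF gc0]) auto
  have gc1': "continuous (at 1 within {1/2..1}) g"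
    by (rule continuous_within_subset[OF gc1]) auto
  note mass1 = mass_half1
  note mass2 = mass_half2
  have far1: "eventually (\<lambda>n. \<forall>x\<in>{0..1/2}. \<delta> \<le> \<bar>x - 0\<bar> \<longrightarrow> phi n x \<le> \<epsilon>) sequentially"
    if "\<delta> > 0" "\<epsilon> > 0" for \<delta> \<epsilon>
  proof (rule far_lemma[OF _ that])
    fix x :: real assume x: "x \<in> {0..1/2}" "x \<noteq> 0"
    show "sin (pi*x) \<noteq> 0"
    proof
      assume "sin (pi*x) = 0"
      then obtain i :: int where i: "x = of_int i" by (rule sin_int_cases)
      then have "0 < of_int i" "of_int i < (1::real)" using x by auto
      then have "0 < i" "i < 1" by (metis of_int_0_less_iff, simp)
      then show False by linarith
    qed
  qed
  have far2: "eventually (\<lambda>n. \<forall>x\<in>{1/2..1}. \<delta> \<le> \<bar>x - 1\<bar> \<longrightarrow> phi n x \<le> \<epsilon>) sequentially"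
    if "\<delta> > 0" "\<epsilon> > 0" for \<delta> \<epsilon>
  proof (rule far_lemma[OF _ that])
    fix x :: real assume x: "x \<in> {1/2..1}" "x \<noteq> 1"
    show "sin (pi*x) \<noteq> 0"
    proof
      assume "sin (pi*x) = 0"
      then obtain i :: int where i: "x = of_int i" by (rule sin_int_cases)
      then have "0 < of_int i" "of_int i < (1::real)" using x by auto
      then have "0 < i" "i < 1" by (metis of_int_0_less_iff, simp)
      then show False by linarith
    qed
  qed
  have L1: "(\<lambda>n. LINT x:{0..1/2}|lborel. g x * phi n x) \<longlonglongrightarrow> 1/2 * g 0"
    by (rule concentrate[OF _ gi1 gc0' mass1 far1]) auto
  have L2: "(\<lambda>n. LINT x:{1/2..1}|lborel. g x * phi n x) \<longlonglongrightarrow> 1/2 * g 1"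
    by (rule concentrate[OF _ gi2 gc1' mass2 far2]) auto
  have split: "(LINT x:{0..1}|lborel. g x * phi n x) =
      (LINT x:{0..1/2}|lborel. g x * phi n x) + (LINT x:{1/2..1}|lborel. g x * phi n x)" for n
  proof -
    have u: "{0..1::real} = {0..1/2} \<union> {1/2..1}" by auto
    have "AE x in lborel. \<not> (x \<in> {0..1/2::real} \<and> x \<in> {1/2..1})"
      using AE_lborel_singleton[of "1/2::real"] by eventually_elim auto
    then show ?thesis unfolding u
      by (rule set_integral_Un_AE) (auto intro: fphi_integrable gi1 gi2)
  qed
  have "(\<lambda>n. (LINT x:{0..1/2}|lborel. g x * phi n x) + (LINT x:{1/2..1}|lborel. g x * phi n x))
      \<longlonglongrightarrow> 1/2 * g 0 + 1/2 * g 1"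
    by (rule tendsto_add[OF L1 L2])
  then show "(\<lambda>n. LINT x:{0..1}|lborel. g x * phi n x) \<longlonglongrightarrow> (g 0 + g 1) / 2"
    unfolding split by (simp add: field_simps)
qed

end
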